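(* Let $d,r\ge2$. The map $\mathbb M_{d,r}\to\mathcal M_{d,r}$ sending $(\mathbf u,\mathbf w)$ to the element whose $i$-th chart representative is $\varphi_i(\mathbf u,\mathbf w)$ is well defined and bijective (each $\varphi_i$ is a bijection $\mathbb M_{d,r}\to M^{(i)}_{d,r}$ and $\mu_{i,i+1}\circ\varphi_i=\varphi_{i+1}$). Under this identification, $(\mathbf a,\mathbf b)\mapsto f_{\mathbf a,\mathbf b}$ is a bijection from $T_{d,r}$ onto $\mathrm{Sp}(\mathcal M_{d,r})$, restricting for each $i\in[r]$ to a bijection from $T_{d,r}(i)$ onto $\mathrm{Sp}(\mathcal M_{d,r},i)$. In particular $\mathcal M_{d,r}$ is full.
   Context: A polyptych lattice over $\mathbb Z$: lattices $\{M_\alpha\}_{\alpha\in I}$ of rank $n$ with piecewise linear maps (continuous, linear on the cones of a complete rational fan) $\mu_{\alpha,\beta}$, $\mu_{\alpha,\alpha}=\mathrm{id}$, $\mu_{\alpha,\beta}=\mu_{\beta,\alpha}^{-1}$, $\mu_{\beta,\gamma}\mu_{\alpha,\beta}=\mu_{\alpha,\gamma}$; elements are classes of $\bigsqcup M_\alpha$ under $m\sim\mu_{\alpha,\beta}(m)$, with chart maps $\pi_\alpha$; $m+_\alpha m'=\pi_\alpha^{-1}(\pi_\alpha m+\pi_\alpha m')$; $\lambda m=\pi_\alpha^{-1}(\lambda\pi_\alpha m)$. A point is $p:\mathcal M\to\mathbb Z$ with $p(m)+p(m')=\min_\alpha p(m+_\alpha m')$ and $p(\lambda m)=\lambda p(m)$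 ($\lambda\in\mathbb Z_{\ge0}$); $\mathrm{Sp}(\mathcal M)$ is the set of points, $\mathrm{Sp}(\mathcal M,\alpha)$ those with $p\circ\pi_\alpha^{-1}$ linear; $\mathcal M$ is full if $\mathrm{Sp}(\mathcal M)=\bigcup_\alpha\mathrm{Sp}(\mathcal M,\alpha)$. The polyptych lattice $\mathcal M_{d,r}$ (rank $d+r-1$): coordinates $(\mathbf u,\mathbf w)\in\mathbb Z^d\times\mathbb Z^r$; charts $M^{(i)}_{d,r}=\{(\mathbf u,\mathbf w):w_i=0\}$ for $i\in[r]$; mutations $\mu_{i,i+1}(\mathbf u,\mathbf w)=(\mathbf u,w_1,\dots,w_{i-1},\min\{u_1,\dots,u_d\}-\sum_kw_k,0,w_{i+2},\dots,w_r)$ for $i\in[r-1]$, with all other $\mu_{i,j}$ obtained by composition and inversion. Let $\mathbf 1=(1,\dots,1)\in\mathbb Z^d$, $\langle\cdot,\cdot\rangle$ the standard pairing, $\varepsilon_i$ standard basis vectors. $\mathbb M_{d,r}=\{(\mathbf u,\mathbf w)\in\mathbb Z^d\times\mathbb Z^r:\min_ju_j=0\}$. $\varphi_i:\mathbb M_{d,r}\to M^{(i)}_{d,r}$, $\varphi_i(\mathbf u,\mathbf w)=\pi_i(\mathbf u+\langle\mathbf 1,\mathbf w\rangle\mathbf 1,\mathbf w)$ where $\pi_i$ sets the $i$-th $\mathbf w$-coordinate to $0$ (its inverse is $(\mathbf u,\mathbf w)\mapsto(\mathbf u-\min(\mathbf u)\mathbf 1,\mathbf w+(\min(\mathbf u)-\langle\mathbf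 1,\mathbf w\rangle)\varepsilon_i)$). $T_{d,r}=\{(\mathbf a,\mathbf b)\in\mathbb Z^d\times\mathbb Z^r:a_1+\cdots+a_d=\min\{b_1,\dots,b_r\}\}$, $T_{d,r}(i)=\{(\mathbf a,\mathbf b)\in T_{d,r}:a_1+\cdots+a_d=b_i\}$. For $(\mathbf a,\mathbf b)\in T_{d,r}$, $f_{\mathbf a,\mathbf b}:\mathbb M_{d,r}\to\mathbb Z$, $f_{\mathbf a,\mathbf b}(\mathbf u,\mathbf w)=\langle\mathbf a,\mathbf u\rangle+\langle\mathbf b,\mathbf w\rangle$. *)

theory Defs
  imports "HOL-Library.FuncSet"
begin

(* Vectors u in Z^d and w in Z^r are int lists of length d resp. r.
   Indices are 0-based: the chart index i in [r] of the paper is i < r here,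
   and w_i of the paper is w ! i (with the shift i -> i-1). *)

type_synonym pt = "int list \<times> int list"

definition vadd :: "pt \<Rightarrow> pt \<Rightarrow> pt" where
  "vadd m m' = (map2 (+) (fst m) (fst m'), map2 (+) (snd m) (snd m'))"

definition vscale :: "int \<Rightarrow> pt \<Rightarrow> pt" where
  "vscale l m = (map ((*) l) (fst m), map ((*) l) (snd m))"

definition chart :: "nat \<Rightarrow> nat \<Rightarrow> nat \<Rightarrow> pt set" where
  "chart d r i = {(u, w). length u = d \<and> length w = r \<and> w ! i = 0}"

definition mu :: "nat \<Rightarrow> pt \<Rightarrow> pt" where
  "mu i m = (case m of (u, w) \<Rightarrow> (u, w[i := Min (set u) - sum_list w, Suc i := 0]))"

definition DU :: "nat \<Rightarrow> nat \<Rightarrow> (nat \<times> pt) set" where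
  "DU d r = {(i, m). i < r \<and> m \<in> chart d r i}"

text \<open>Generating identifications m ~ mu_{i,i+1}(m); all other mu_{i,j} are
  compositions/inverses of these, so the identification relation is the
  equivalence relation generated by them.\<close>
definition mstep :: "nat \<Rightarrow> nat \<Rightarrow> nat \<times> pt \<Rightarrow> nat \<times> pt \<Rightarrow> bool" where
  "mstep d r x y \<longleftrightarrow> Suc (fst x) < r \<and> snd x \<in> chart d r (fst x)
      \<and> fst y = Suc (fst x) \<and> snd y = mu (fst x) (snd x)"

definition mrel :: "nat \<Rightarrow> nat \<Rightarrow> ((nat \<times> pt) \<times> (nat \<times> pt)) set" where
  "mrel d r = {(x, y). x \<in> DU d r \<and> y \<in> DU d r \<and> (sup (mstep d r) (mstep d r)\<inverse>\<inverse>)\<^sup>*\<^sup>* x y}"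

definition PL :: "nat \<Rightarrow> nat \<Rightarrow> (nat \<times> pt) set set" where
  "PL d r = DU d r // mrel d r"

definition chartmap :: "nat \<Rightarrow> (nat \<times> pt) set \<Rightarrow> pt" where
  "chartmap i X = (THE m. (i, m) \<in> X)"

definition chartinv :: "nat \<Rightarrow> nat \<Rightarrow> nat \<Rightarrow> pt \<Rightarrow> (nat \<times> pt) set" where
  "chartinv d r i m = mrel d r `` {(i, m)}"

definition padd :: "nat \<Rightarrow> nat \<Rightarrow> nat \<Rightarrow> (nat \<times> pt) set \<Rightarrow> (nat \<times> pt) set \<Rightarrow> (nat \<times> pt) set" where
  "padd d r i X Y = chartinv d r i (vadd (chartmap i X) (chartmap i Y))"

definition psmul :: "nat \<Rightarrow> nat \<Rightarrow> nat \<Rightarrow> int \<Rightarrow> (nat \<times> pt) set \<Rightarrow> (nat \<times> pt) set" where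
  "psmul d r i l X = chartinv d r i (vscale l (chartmap i X))"

definition Sp :: "nat \<Rightarrow> nat \<Rightarrow> ((nat \<times> pt) set \<Rightarrow> int) set" where
  "Sp d r = {p \<in> extensional (PL d r).
      (\<forall>X\<in>PL d r. \<forall>Y\<in>PL d r. p X + p Y = Min {p (padd d r i X Y) | i. i < r}) \<and>
      (\<forall>X\<in>PL d r. \<forall>l::int. l \<ge> 0 \<longrightarrow> (\<forall>i<r. p (psmul d r i l X) = l * p X))}"

text \<open>Points that are linear in chart i, i.e. p o pi_i^{-1} is additive (hence Z-linear)
  on the lattice M^(i).\<close>
definition Sp_chart :: "nat \<Rightarrow> nat \<Rightarrow> nat \<Rightarrow> ((nat \<times> pt) set \<Rightarrow> int) set" where
  "Sp_chart d r i = {p \<in> Sp d r. \<forall>m\<in>chart d r i. \<forall>m'\<in>chart d r i.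
      p (chartinv d r i (vadd m m')) = p (chartinv d r i m) + p (chartinv d r i m')}"

definition full :: "nat \<Rightarrow> nat \<Rightarrow> bool" where
  "full d r \<longleftrightarrow> Sp d r = (\<Union>i<r. Sp_chart d r i)"

definition MM :: "nat \<Rightarrow> nat \<Rightarrow> pt set" where
  "MM d r = {(u, w). length u = d \<and> length w = r \<and> Min (set u) = 0}"

definition phi :: "nat \<Rightarrow> pt \<Rightarrow> pt" where
  "phi i m = (case m of (u, w) \<Rightarrow> (map (\<lambda>x. x + sum_list w) u, w[i := 0]))"

definition Phi :: "nat \<Rightarrow> nat \<Rightarrow> pt \<Rightarrow> (nat \<times> pt) set" where
  "Phi d r m = chartinv d r 0 (phi 0 m)"

definition T :: "nat \<Rightarrow> nat \<Rightarrow> pt set" where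
  "T d r = {(a, b). length a = d \<and> length b = r \<and> sum_list a = Min (set b)}"

definition T_i :: "nat \<Rightarrow> nat \<Rightarrow> nat \<Rightarrow> pt set" where
  "T_i d r i = {(a, b). (a, b) \<in> T d r \<and> sum_list a = b ! i}"

definition fab :: "int list \<Rightarrow> int list \<Rightarrow> pt \<Rightarrow> int" where
  "fab a b m = sum_list (map2 (*) a (fst m)) + sum_list (map2 (*) b (snd m))"

definition pull :: "nat \<Rightarrow> nat \<Rightarrow> ((nat \<times> pt) set \<Rightarrow> int) \<Rightarrow> (pt \<Rightarrow> int)" where
  "pull d r p = restrict (p \<circ> Phi d r) (MM d r)"

end

theory Submission imports Defs begin

lemma sum_list_upd: "i < length w \<Longrightarrow> sum_list (w[i:=v]) = sum_list w - w!i + (v::int)"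
  by (induction w arbitrary: i) (auto split: nat.split)

lemma dot_upd: "length b = length w \<Longrightarrow> i < length w \<Longrightarrow>
   sum_list (map2 (*) b (w[i:=v])) = sum_list (map2 (*) b w) + b!i * (v - w!i :: int)"
  by (induction b w arbitrary: i rule: list_induct2) (auto split: nat.split simp: algebra_simps)

lemma dot_shift: "length a = length u \<Longrightarrow>
   sum_list (map2 (*) a (map (\<lambda>t. t - c) u)) = sum_list (map2 (*) a u) - c * sum_list (a::int list)"
  by (induction a u rule: list_induct2) (auto simp: algebra_simps)

lemma dot_add: "length a = length u \<Longrightarrow> length u = length v \<Longrightarrow>
   sum_list (map2 (*) a (map2 (+) u v)) = sum_list (map2 (*) a u) + sum_list (map2 (*) (a::int list) v)"
  by (induction a u v rule: list_induct3) (auto simp: algebra_simps)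

lemma dot_scale: "length a = length u \<Longrightarrow>
   sum_list (map2 (*) a (map ((*) l) u)) = l * sum_list (map2 (*) (a::int list) u)"
  by (induction a u rule: list_induct2) (auto simp: algebra_simps)

lemma min_plus: "u \<noteq> [] \<Longrightarrow> Min (set (map (\<lambda>t. t + s) u)) = Min (set u) + (s::int)"
  using Min_add_commute[of "set u" id s] by (simp add: set_map)

lemma min_minus: "u \<noteq> [] \<Longrightarrow> Min (set (map (\<lambda>t. t - s) u)) = Min (set u) - (s::int)"
  using min_plus[of u "-s"] by simp

lemma min_plus': "u \<noteq> [] \<Longrightarrow> Min ((\<lambda>t. t + s) ` set u) = Min (set u) + (s::int)"
  using min_plus by simp
lemma min_minus': "u \<noteq> [] \<Longrightarrow> Min ((\<lambda>t. t - s) ` set u) = Min (set u) - (s::int)"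
  using min_minus by simp

lemma min_scale: "u \<noteq> [] \<Longrightarrow> 0 \<le> l \<Longrightarrow> Min (set (map ((*) l) u)) = l * Min (set (u::int list))"
  using mono_Min_commute[of "(*) l" "set u"] by (simp add: mono_def mult_left_mono)


definition psi :: "nat \<Rightarrow> pt \<Rightarrow> pt" where
  "psi i m = (case m of (u, w) \<Rightarrow> (map (\<lambda>t. t - Min (set u)) u, w[i := Min (set u) - sum_list w]))"

definition shift :: "nat \<Rightarrow> pt \<Rightarrow> pt" where
  "shift i m = (case m of (u, w) \<Rightarrow> (map (\<lambda>t. t - Min (set u)) u, w[i := w!i + Min (set u)]))"

lemma MM_iff: "(u, w) \<in> MM d r \<longleftrightarrow> length u = d \<and> length w = r \<and> Min (set u) = 0"
  by (simp add: MM_def)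

lemma chart_iff: "(u, w) \<in> chart d r i \<longleftrightarrow> length u = d \<and> length w = r \<and> w ! i = 0"
  by (simp add: chart_def)

lemma Min0_ge: "Min (set u) = (0::int) \<Longrightarrow> t \<in> set u \<Longrightarrow> 0 \<le> t"
  by (metis List.finite_set Min_le)

lemma Min0_mem: "Min (set u) = (0::int) \<Longrightarrow> u \<noteq> [] \<Longrightarrow> \<exists>j<length u. u!j = 0"
  by (metis List.finite_set Min_in in_set_conv_nth set_empty)

lemma psi_phi: "i < length w \<Longrightarrow> u \<noteq> [] \<Longrightarrow> psi i (phi i (u, w)) = shift i (u, w)"
  by (simp add: psi_def phi_def shift_def min_plus' sum_list_upd comp_def add.commute)

lemma shift_MM: "(u, w) \<in> MM d r \<Longrightarrow> shift i (u, w) = (u, w)"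
  by (simp add: shift_def MM_iff map_idI)

lemma phi_psi: "(u, w) \<in> chart d r i \<Longrightarrow> i < r \<Longrightarrow> 0 < d \<Longrightarrow> phi i (psi i (u, w)) = (u, w)"
  apply (cases "u = []", simp add: chart_iff)
  apply (simp add: psi_def phi_def chart_iff min_minus' sum_list_upd comp_def map_idI)
  by (metis list_update_id)

lemma psi_MM: "m \<in> chart d r i \<Longrightarrow> i < r \<Longrightarrow> 0 < d \<Longrightarrow> psi i m \<in> MM d r"
  by (cases m; cases "fst m = []") (auto simp: psi_def chart_iff MM_iff min_minus')

lemma phi_chart: "x \<in> MM d r \<Longrightarrow> i < r \<Longrightarrow> phi i x \<in> chart d r i"
  by (cases x) (auto simp: phi_def chart_iff MM_iff)

lemma psi_phi_MM: "x \<in> MM d r \<Longrightarrow> i < r \<Longrightarrow> 0 < d \<Longrightarrow> psi i (phi i x) = x"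
  by (cases x) (auto simp: MM_iff psi_phi shift_MM)

lemma mu_phi: "x \<in> MM d r \<Longrightarrow> Suc i < r \<Longrightarrow> 0 < d \<Longrightarrow> mu i (phi i x) = phi (Suc i) x"
proof -
  assume a: "x \<in> MM d r" "Suc i < r" "0 < d"
  obtain u w where x: "x = (u, w)" by fastforce
  have u: "u \<noteq> []" "Min (set u) = 0" "length w = r" using a x by (auto simp: MM_iff)
  have "Min (set (map (\<lambda>x. x + sum_list w) u)) - sum_list (w[i := 0]) = w ! i"
    using u a by (simp add: min_plus' sum_list_upd)
  then show ?thesis using x u a
    by (simp add: mu_def phi_def del: set_map)
qed

lemma phi_psi': "m \<in> chart d r i \<Longrightarrow> i < r \<Longrightarrow> 0 < d \<Longrightarrow> phi i (psi i m) = m"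
  by (cases m) (simp add: phi_psi)

lemma mu_inj: assumes "m \<in> chart d r i" "m' \<in> chart d r i" "Suc i < r" "0 < d" "mu i m = mu i m'"
  shows "m = m'"
proof -
  have i: "i < r" using assms by simp
  have "mu i m = phi (Suc i) (psi i m)" "mu i m' = phi (Suc i) (psi i m')"
    using mu_phi[OF psi_MM[OF assms(1) i assms(4)] assms(3,4)] mu_phi[OF psi_MM[OF assms(2) i assms(4)] assms(3,4)]
      phi_psi'[OF assms(1) i assms(4)] phi_psi'[OF assms(2) i assms(4)] by auto
  hence "psi (Suc i) (phi (Suc i) (psi i m)) = psi (Suc i) (phi (Suc i) (psi i m'))" using assms by simp
  hence "psi i m = psi i m'" using psi_phi_MM psi_MM assms i by metis
  thus ?thesis using phi_psi' assms i by metis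
qed

lemma rtranclp_sym: "(sup S S\<inverse>\<inverse>)\<^sup>*\<^sup>* a b \<Longrightarrow> (sup S S\<inverse>\<inverse>)\<^sup>*\<^sup>* b a"
proof (induction rule: rtranclp_induct)
  case base then show ?case by simp
next
  case (step y z)
  then have "(sup S S\<inverse>\<inverse>) z y" by auto
  then show ?case using step converse_rtranclp_into_rtranclp by metis
qed

locale PLs = fixes d r :: nat assumes d2: "2 \<le> d" and r2: "2 \<le> r"
begin

definition cls :: "pt \<Rightarrow> (nat \<times> pt) set" where "cls x = {(i, phi i x) | i. i < r}"

lemma d0: "0 < d" using d2 by simp
lemma r0: "0 < r" using r2 by simp

lemma reach_cls:
  assumes "(sup (mstep d r) (mstep d r)\<inverse>\<inverse>)\<^sup>*\<^sup>* (i, phi i x) y" "x \<in> MM d r" "i < r"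
  shows "y \<in> cls x"
  using assms(1)
proof (induction rule: rtranclp_induct)
  case base then show ?case using assms by (auto simp: cls_def)
next
  case (step y z)
  then obtain j where j: "j < r" "y = (j, phi j x)" by (auto simp: cls_def)
  from step(2) show ?case
  proof
    assume "mstep d r y z"
    then show ?thesis using j mu_phi[OF assms(2) _ d0, of j] by (cases z) (auto simp: mstep_def cls_def)
  next
    assume "(mstep d r)\<inverse>\<inverse> y z"
    then have m: "mstep d r z y" by simp
    obtain k m where z: "z = (k, m)" by (cases z)
    have "j = Suc k" "m \<in> chart d r k" "Suc k < r" "phi j x = mu k m" using m z j by (auto simp: mstep_def)
    moreover have "mu k (phi k x) = phi (Suc k) x" using mu_phi[OF assms(2) _ d0] calculation by simp
    moreover have "phi k x \<in> chart d r k" using phi_chart[OF assms(2)] calculation by simp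
    ultimately have "m = phi k x" using mu_inj[OF _ _ _ d0] by metis
    then show ?thesis using z \<open>Suc k < r\<close> by (auto simp: cls_def)
  qed
qed

lemma cls_reach: "x \<in> MM d r \<Longrightarrow> j < r \<Longrightarrow> (sup (mstep d r) (mstep d r)\<inverse>\<inverse>)\<^sup>*\<^sup>* (0, phi 0 x) (j, phi j x)"
proof (induction j)
  case 0 then show ?case by simp
next
  case (Suc j)
  have "mstep d r (j, phi j x) (Suc j, phi (Suc j) x)"
    using Suc.prems phi_chart[OF Suc.prems(1), of j] mu_phi[OF Suc.prems(1) _ d0, of j] by (simp add: mstep_def)
  then show ?case using Suc by (meson Suc_lessD rtranclp.rtrancl_into_rtrancl sup2I1)
qed

lemma cls_DU: "x \<in> MM d r \<Longrightarrow> cls x \<subseteq> DU d r"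
proof
  fix y assume "x \<in> MM d r" "y \<in> cls x"
  then obtain j where "j < r" "y = (j, phi j x)" by (auto simp: cls_def)
  then show "y \<in> DU d r" using phi_chart[OF \<open>x \<in> MM d r\<close> \<open>j < r\<close>] by (simp add: DU_def)
qed

lemma mrel_Im: assumes "x \<in> MM d r" "i < r" shows "mrel d r `` {(i, phi i x)} = cls x"
proof
  show "mrel d r `` {(i, phi i x)} \<subseteq> cls x"
  proof
    fix y assume "y \<in> mrel d r `` {(i, phi i x)}"
    then have "(sup (mstep d r) (mstep d r)\<inverse>\<inverse>)\<^sup>*\<^sup>* (i, phi i x) y" by (simp add: mrel_def)
    then show "y \<in> cls x" using reach_cls assms by blast
  qed
  show "cls x \<subseteq> mrel d r `` {(i, phi i x)}"
  proof
    fix y assume y: "y \<in> cls x"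
    then obtain j where j: "j < r" "y = (j, phi j x)" by (auto simp: cls_def)
    have "(sup (mstep d r) (mstep d r)\<inverse>\<inverse>)\<^sup>*\<^sup>* (i, phi i x) y"
      using rtranclp_sym[OF cls_reach[OF assms]] cls_reach[OF assms(1) j(1)] j by (meson rtranclp_trans)
    moreover have "(i, phi i x) \<in> DU d r" "y \<in> DU d r" using cls_DU[OF assms(1)] y assms by (auto simp: cls_def)
    ultimately show "y \<in> mrel d r `` {(i, phi i x)}" by (auto simp: mrel_def)
  qed
qed

lemma PL_eq: "PL d r = cls ` MM d r"
proof -
  have "PL d r = (\<Union>y\<in>DU d r. {mrel d r `` {y}})" by (simp add: PL_def quotient_def)
  also have "\<dots> = cls ` MM d r"
  proof
    show "(\<Union>y\<in>DU d r. {mrel d r `` {y}}) \<subseteq> cls ` MM d r"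
    proof clarify
      fix i m assume "(i, m) \<in> DU d r"
      then have im: "i < r" "m \<in> chart d r i" by (auto simp: DU_def)
      then have "mrel d r `` {(i, m)} = cls (psi i m)"
        using mrel_Im[OF psi_MM[OF im(2) im(1) d0] im(1)] phi_psi'[OF im(2) im(1) d0] by simp
      then show "mrel d r `` {(i, m)} \<in> cls ` MM d r" using psi_MM[OF im(2) im(1) d0] by auto
    qed
    show "cls ` MM d r \<subseteq> (\<Union>y\<in>DU d r. {mrel d r `` {y}})"
    proof clarify
      fix x assume x: "x \<in> MM d r"
      have "(0, phi 0 x) \<in> DU d r" using cls_DU[OF x] r0 by (auto simp: cls_def)
      then show "cls x \<in> (\<Union>y\<in>DU d r. {mrel d r `` {y}})" using mrel_Im[OF x r0] by blast
    qed
  qed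
  finally show ?thesis .
qed

lemma Phi_eq: "x \<in> MM d r \<Longrightarrow> Phi d r x = cls x"
  using mrel_Im[OF _ r0] by (simp add: Phi_def chartinv_def)

lemma chartinv_eq: "m \<in> chart d r i \<Longrightarrow> i < r \<Longrightarrow> chartinv d r i m = cls (psi i m)"
  using mrel_Im[OF psi_MM[OF _ _ d0]] phi_psi'[OF _ _ d0] by (metis chartinv_def)

lemma chartmap_cls: "x \<in> MM d r \<Longrightarrow> i < r \<Longrightarrow> chartmap i (cls x) = phi i x"
  by (simp add: chartmap_def cls_def)

lemma cls_inj: "x \<in> MM d r \<Longrightarrow> y \<in> MM d r \<Longrightarrow> cls x = cls y \<Longrightarrow> x = y"
  by (metis chartmap_cls psi_phi_MM r0 d0)

end


lemma sum_list_add: "length w = length w' \<Longrightarrow> sum_list (map2 (+) w w') = sum_list w + sum_list (w'::int list)"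
  by (induction w w' rule: list_induct2) auto

lemma sum_list_scale: "sum_list (map ((*) l) w) = l * sum_list (w::int list)"
  by (induction w) (auto simp: algebra_simps)

lemma MM_len: "x \<in> MM d r \<Longrightarrow> length (fst x) = d \<and> length (snd x) = r \<and> Min (set (fst x)) = 0"
  by (cases x) (simp add: MM_iff)

lemma phi_add: assumes "x \<in> MM d r" "y \<in> MM d r" "i < r"
  shows "vadd (phi i x) (phi i y) = phi i (vadd x y)"
proof -
  obtain u w u' w' where xy: "x = (u, w)" "y = (u', w')" by fastforce
  have l: "length u = d" "length u' = d" "length w = r" "length w' = r" using assms xy by (auto simp: MM_iff)
  show ?thesis using l assms(3) unfolding xy vadd_def phi_def
    by (auto intro!: nth_equalityI simp: sum_list_add nth_list_update)
qed

lemma phi_scale: "vscale l (phi i x) = phi i (vscale l x)"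
  by (cases x) (simp add: vscale_def phi_def sum_list_scale map_update algebra_simps comp_def)

lemma fab_add: assumes "x \<in> MM d r" "y \<in> MM d r" "length a = d" "length b = r"
  shows "fab a b (vadd x y) = fab a b x + fab a b y"
  using assms MM_len[OF assms(1)] MM_len[OF assms(2)] by (simp add: fab_def vadd_def dot_add)

lemma fab_scale: assumes "x \<in> MM d r" "length a = d" "length b = r"
  shows "fab a b (vscale l x) = l * fab a b x"
  using assms MM_len[OF assms(1)] by (simp add: fab_def vscale_def dot_scale algebra_simps)

lemma fab_shift: assumes "length (fst z) = d" "length (snd z) = r" "length a = d" "length b = r" "i < r"
  shows "fab a b (shift i z) = fab a b z + Min (set (fst z)) * (b!i - sum_list a)"
  using assms by (cases z) (simp add: fab_def shift_def dot_shift dot_upd algebra_simps)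

lemma vadd_len: "x \<in> MM d r \<Longrightarrow> y \<in> MM d r \<Longrightarrow> length (fst (vadd x y)) = d \<and> length (snd (vadd x y)) = r"
  by (auto simp: vadd_def dest!: MM_len)

lemma vadd_min_ge: assumes "x \<in> MM d r" "y \<in> MM d r" "0 < d"
  shows "0 \<le> Min (set (fst (vadd x y)))"
proof -
  have "\<forall>t\<in>set (fst (vadd x y)). 0 \<le> t"
  proof
    fix t assume "t \<in> set (fst (vadd x y))"
    then obtain k where k: "k < d" "t = fst (vadd x y) ! k" using vadd_len[OF assms(1,2)] by (metis in_set_conv_nth)
    have "fst x ! k \<in> set (fst x)" "fst y ! k \<in> set (fst y)" using k MM_len[OF assms(1)] MM_len[OF assms(2)] by auto
    then have "0 \<le> fst x ! k" "0 \<le> fst y ! k" using Min0_ge MM_len assms by blast+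
    then show "0 \<le> t" using k MM_len[OF assms(1)] MM_len[OF assms(2)] by (simp add: vadd_def)
  qed
  moreover have "set (fst (vadd x y)) \<noteq> {}" using vadd_len[OF assms(1,2)] assms(3) by auto
  ultimately show ?thesis by simp
qed

lemma shift_MM2: assumes "length (fst z) = d" "length (snd z) = r" "i < r" "0 < d"
  shows "shift i z \<in> MM d r"
  using assms by (cases z) (auto simp: shift_def MM_iff min_minus')

lemma vscale_MM: "x \<in> MM d r \<Longrightarrow> 0 \<le> l \<Longrightarrow> 0 < d \<Longrightarrow> vscale l x \<in> MM d r"
  by (cases x) (auto simp: vscale_def MM_iff min_scale[unfolded set_map])

context PLs begin

lemma chartinv_phi: "z \<in> MM d r \<Longrightarrow> i < r \<Longrightarrow> chartinv d r i (phi i z) = cls z"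
  using chartinv_eq[OF phi_chart] psi_phi_MM d0 by metis

lemma padd_cls: assumes "x \<in> MM d r" "y \<in> MM d r" "i < r"
  shows "padd d r i (cls x) (cls y) = cls (shift i (vadd x y))"
    and "chartinv d r i (vadd (phi i x) (phi i y)) = cls (shift i (vadd x y))"
proof -
  obtain u w where z: "vadd x y = (u, w)" by fastforce
  have l: "length u = d" "length w = r" using vadd_len[OF assms(1,2)] z by auto
  have "vadd (phi i x) (phi i y) \<in> chart d r i"
  proof -
    have "phi i (vadd x y) \<in> chart d r i" using l z assms(3) by (simp add: phi_def chart_iff)
    then show ?thesis using phi_add[OF assms] by simp
  qed
  then have "chartinv d r i (vadd (phi i x) (phi i y)) = cls (psi i (phi i (vadd x y)))"
    using chartinv_eq assms phi_add by metis
  also have "psi i (phi i (vadd x y)) = shift i (vadd x y)" using psi_phi l z assms(3) d0 by auto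
  finally show "chartinv d r i (vadd (phi i x) (phi i y)) = cls (shift i (vadd x y))" .
  then show "padd d r i (cls x) (cls y) = cls (shift i (vadd x y))"
    using chartmap_cls assms by (simp add: padd_def)
qed

lemma psmul_cls: assumes "x \<in> MM d r" "i < r" "0 \<le> l"
  shows "psmul d r i l (cls x) = cls (vscale l x)"
  using assms chartmap_cls phi_scale chartinv_phi vscale_MM d0 by (simp add: psmul_def)

end

definition ev :: "nat \<Rightarrow> nat \<Rightarrow> int list" where "ev n k = (replicate n 0)[k := 1]"

lemma dot_rep: "length a = n \<Longrightarrow> sum_list (map2 (*) a (replicate n c)) = c * sum_list (a::int list)"
  by (induction a arbitrary: n) (auto simp: algebra_simps)

lemma Min0I: "\<forall>t\<in>set v. (0::int) \<le> t \<Longrightarrow> 0 \<in> set v \<Longrightarrow> Min (set v) = 0"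
  by (simp add: Min_eqI)

lemma ev_MM: "k < d \<Longrightarrow> 2 \<le> d \<Longrightarrow> length w = r \<Longrightarrow> (ev d k, w) \<in> MM d r"
proof -
  assume a: "k < d" "2 \<le> d" "length w = r"
  have "\<forall>t\<in>set (ev d k). 0 \<le> t"
    using a by (auto simp: ev_def in_set_conv_nth nth_list_update split: if_splits)
  moreover have "0 \<in> set (ev d k)" using a unfolding in_set_conv_nth
    by (intro exI[of _ "if k = 0 then 1 else 0"]) (auto simp: ev_def)
  ultimately show ?thesis using a by (auto simp: MM_iff ev_def intro!: Min0I)
qed

lemma zero_MM: "0 < d \<Longrightarrow> length w = r \<Longrightarrow> (replicate d 0, w) \<in> MM d r"
  by (simp add: MM_iff)

lemma fab_ev1: "length a = d \<Longrightarrow> length b = r \<Longrightarrow> k < d \<Longrightarrow> fab a b (ev d k, replicate r 0) = a ! k"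
  by (simp add: fab_def ev_def dot_upd dot_rep)

lemma fab_ev2: "length a = d \<Longrightarrow> length b = r \<Longrightarrow> k < r \<Longrightarrow> fab a b (replicate d 0, (replicate r 0)[k := s]) = s * b ! k"
  by (simp add: fab_def dot_upd dot_rep)


lemma sum_abs_upd: "i < length u \<Longrightarrow> sum_list (map abs (u[i:=v])) = sum_list (map abs u) - \<bar>u!i\<bar> + \<bar>v::int\<bar>"
  by (simp add: map_update sum_list_upd)

lemma sum_abs_ge: "0 \<le> sum_list (map abs (u::int list))"
  by (induction u) auto

lemma classify:
  fixes g :: "pt \<Rightarrow> int" and d r :: nat
  assumes d2: "2 \<le> d" and r0: "0 < r"
    and A: "\<forall>x\<in>MM d r. \<forall>y\<in>MM d r. g x + g y = Min {g (shift i (vadd x y)) | i. i < r}"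
  defines "a \<equiv> map (\<lambda>k. g (ev d k, replicate r 0)) [0..<d]"
    and "b \<equiv> map (\<lambda>k. g (replicate d 0, (replicate r 0)[k := 1])) [0..<r]"
  shows "(\<forall>x\<in>MM d r. g x = fab a b x) \<and> sum_list a = Min (set b)"
proof -
  have d0: "0 < d" using d2 by simp
  have la: "length a = d" and lb: "length b = r" by (simp_all add: a_def b_def)
  have addc: "vadd x y \<in> MM d r \<and> g (vadd x y) = g x + g y"
    if xy: "x \<in> MM d r" "y \<in> MM d r" "j < d" "fst x ! j = 0" "fst y ! j = 0" for x y j
  proof -
    have l: "length (fst (vadd x y)) = d" "length (snd (vadd x y)) = r" using vadd_len[OF xy(1,2)] by auto
    have m: "0 \<le> Min (set (fst (vadd x y)))" using vadd_min_ge[OF xy(1,2) d0] .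
    have "\<forall>t\<in>set (fst (vadd x y)). 0 \<le> t" using m by (meson List.finite_set Min_le order_trans)
    moreover have "fst (vadd x y) ! j = 0" using xy MM_len[OF xy(1)] MM_len[OF xy(2)] by (simp add: vadd_def)
    then have "0 \<in> set (fst (vadd x y))" using l xy(3) by (metis nth_mem)
    ultimately have mm: "Min (set (fst (vadd x y))) = 0" by (rule Min0I)
    then have inM: "vadd x y \<in> MM d r" using l by (cases "vadd x y") (simp add: MM_iff)
    have "{g (shift i (vadd x y)) | i. i < r} = {g (vadd x y)}"
      using shift_MM[of "fst (vadd x y)" "snd (vadd x y)" d r] inM r0 by auto
    then show ?thesis using A xy inM by simp
  qed
  define zd where "zd = (replicate d (0::int))"
  define zr where "zr = (replicate r (0::int))"
  have zd0: "zd ! 0 = 0" using d0 by (simp add: zd_def)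
  have g0: "g (zd, zr) = 0"
  proof -
    have "vadd (zd, zr) (zd, zr) = (zd, zr)" by (simp add: vadd_def zd_def zr_def zip_replicate)
    then show ?thesis using addc[of "(zd, zr)" "(zd, zr)" 0] zero_MM[OF d0] zd0 d0 by (simp add: zd_def zr_def)
  qed
  have gneg: "g (zd, zr[k := -1]) = - (b ! k)" if k: "k < r" for k
  proof -
    have "vadd (zd, zr[k := -1]) (zd, zr[k := 1]) = (zd, zr)"
      using k by (auto simp: vadd_def zd_def zr_def zip_replicate intro!: nth_equalityI simp: nth_list_update)
    then have "g (zd, zr) = g (zd, zr[k := -1]) + g (zd, zr[k := 1])"
      using addc[of "(zd, zr[k := -1])" "(zd, zr[k := 1])" 0] zero_MM[OF d0] zd0 d0 by (simp add: zd_def zr_def)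
    then show ?thesis using g0 k by (simp add: b_def zd_def zr_def)
  qed
  define N where "N x = sum_list (map abs (fst x)) + sum_list (map abs (snd x))" for x :: pt
  have main: "\<forall>x\<in>MM d r. nat (N x) = n \<longrightarrow> g x = fab a b x" for n
  proof (induction n rule: less_induct)
    case (less n)
    show ?case
    proof (intro ballI impI)
      fix x assume x: "x \<in> MM d r" and Nx: "nat (N x) = n"
      obtain u w where xuw: "x = (u, w)" by fastforce
      have lu: "length u = d" and lw: "length w = r" and mu0: "Min (set u) = 0" using x xuw by (auto simp: MM_iff)
      have uge: "0 \<le> u ! k" if "k < d" for k using Min0_ge[OF mu0] that lu by simp
      show "g x = fab a b x"
      proof (cases "\<exists>k<d. u ! k \<noteq> 0")
        case True
        then obtain k where k: "k < d" "u ! k \<noteq> 0" by blast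
        have kpos: "0 < u ! k" using uge[OF k(1)] k by simp
        obtain j where j: "j < d" "u ! j = 0" using Min0_mem[OF mu0] lu d0 by auto
        have jk: "j \<noteq> k" using j k by auto
        define x' where "x' = (u[k := u ! k - 1], w)"
        define e where "e = (ev d k, zr)"
        have x'M: "x' \<in> MM d r"
        proof -
          have "\<forall>t\<in>set (u[k := u ! k - 1]). 0 \<le> t"
            using uge kpos lu k(1) by (auto simp: in_set_conv_nth nth_list_update)
          moreover have "0 \<in> set (u[k := u ! k - 1])" using j jk lu unfolding in_set_conv_nth
            by (intro exI[of _ j]) simp
          ultimately show ?thesis using lu lw by (simp add: x'_def MM_iff Min0I)
        qed
        have eM: "e \<in> MM d r" using ev_MM[OF k(1) d2, of zr r] by (simp add: e_def zr_def)
        have sum: "vadd x' e = x" using lu lw k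
          by (auto simp: x'_def e_def ev_def vadd_def xuw zr_def intro!: nth_equalityI simp: nth_list_update)
        have z: "fst x' ! j = 0" "fst e ! j = 0" using j jk lu by (simp_all add: x'_def e_def ev_def)
        have gx: "g x = g x' + g e" using addc[OF x'M eM j(1) z] sum by simp
        have "N x' = N x - 1" using lu k kpos sum_abs_upd[of k u] by (simp add: N_def x'_def xuw)
        moreover have "0 \<le> N x'" by (simp add: N_def sum_abs_ge)
        ultimately have "nat (N x') < n" using Nx by linarith
        then have ih: "g x' = fab a b x'" using less x'M by blast
        have ge: "g e = a ! k" using k by (simp add: a_def e_def zr_def)
        have "fab a b x = fab a b x' + fab a b e" using fab_add[OF x'M eM la lb] sum by simp
        moreover have "fab a b e = a ! k" using fab_ev1[OF la lb k(1)] by (simp add: e_def zr_def)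
        ultimately show ?thesis using gx ih ge by simp
      next
        case False
        then have uz: "u = zd" using lu by (auto simp: zd_def intro!: nth_equalityI)
        show ?thesis
        proof (cases "\<exists>k<r. w ! k \<noteq> 0")
          case True
          then obtain k where k: "k < r" "w ! k \<noteq> 0" by blast
          define s where "s = (if 0 < w ! k then 1 else (-1::int))"
          define x' where "x' = (zd, w[k := w ! k - s])"
          define e where "e = (zd, zr[k := s])"
          have x'M: "x' \<in> MM d r" using d0 lw by (simp add: x'_def zd_def MM_iff)
          have eM: "e \<in> MM d r" using d0 by (simp add: e_def zd_def zr_def MM_iff)
          have sum: "vadd x' e = x" using lw k uz
            by (auto simp: x'_def e_def vadd_def xuw zr_def zd_def zip_replicate intro!: nth_equalityI simp: nth_list_update)
          have gx: "g x = g x' + g e" using addc[OF x'M eM d0] zd0 sum by (simp add: x'_def e_def)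
          have "\<bar>w ! k - s\<bar> = \<bar>w ! k\<bar> - 1" using k by (auto simp: s_def)
          then have "N x' = N x - 1" using lw k sum_abs_upd[of k w] uz by (simp add: N_def x'_def xuw)
          moreover have "0 \<le> N x'" by (simp add: N_def sum_abs_ge)
          ultimately have "nat (N x') < n" using Nx by linarith
          then have ih: "g x' = fab a b x'" using less x'M by blast
          have ge: "g e = s * b ! k"
          proof (cases "0 < w ! k")
            case True then show ?thesis using k by (simp add: s_def e_def b_def zd_def zr_def)
          next
            case False then show ?thesis using gneg[OF k(1)] by (simp add: s_def e_def)
          qed
          have "fab a b x = fab a b x' + fab a b e" using fab_add[OF x'M eM la lb] sum by simp
          moreover have "fab a b e = s * b ! k" using fab_ev2[OF la lb k(1)] by (simp add: e_def zr_def zd_def)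
          ultimately show ?thesis using gx ih ge by simp
        next
          case False
          then have "w = zr" using lw by (auto simp: zr_def intro!: nth_equalityI)
          then have "x = (zd, zr)" using uz xuw by simp
          moreover have "fab a b (zd, zr) = 0" using la lb by (simp add: fab_def zd_def zr_def dot_rep)
          ultimately show ?thesis using g0 by simp
        qed
      qed
    qed
  qed
  have lin: "\<forall>x\<in>MM d r. g x = fab a b x" using main by blast
  define x0 where "x0 = (ev d 0, zr)"
  define y0 where "y0 = ((replicate d (1::int))[0 := 0], zr)"
  have x0M: "x0 \<in> MM d r" using ev_MM[OF d0 d2, of zr r] by (simp add: x0_def zr_def)
  have y0M: "y0 \<in> MM d r"
  proof -
    have "\<forall>t\<in>set ((replicate d (1::int))[0 := 0]). 0 \<le> t" by (auto simp: in_set_conv_nth nth_list_update)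
    moreover have "(0::int) \<in> set ((replicate d (1::int))[0 := 0])" using d0 unfolding in_set_conv_nth
      by (intro exI[of _ 0]) simp
    ultimately show ?thesis by (simp add: y0_def zr_def MM_iff Min0I)
  qed
  have s01: "vadd x0 y0 = (replicate d 1, zr)" using d0
    by (auto simp: x0_def y0_def ev_def vadd_def zr_def zip_replicate intro!: nth_equalityI simp: nth_list_update)
  have shi: "shift i (vadd x0 y0) = (zd, zr[i := 1])" if "i < r" for i
  proof -
    have "Min (set (replicate d (1::int))) = 1" using d0 by simp
    then show ?thesis using s01 that by (simp add: shift_def zd_def zr_def)
  qed
  have "{g (shift i (vadd x0 y0)) | i. i < r} = {g (zd, zr[i := 1]) | i. i < r}" using shi by force
  then have "g x0 + g y0 = Min {g (zd, zr[i := 1]) | i. i < r}" using A x0M y0M by simp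
  also have "{g (zd, zr[i := 1]) | i. i < r} = set b" by (auto simp: b_def zd_def zr_def)
  finally have e1: "g x0 + g y0 = Min (set b)" .
  have "g x0 + g y0 = fab a b (vadd x0 y0)" using lin x0M y0M fab_add[OF x0M y0M la lb] by simp
  also have "\<dots> = sum_list a" using s01 la lb by (simp add: fab_def zr_def dot_rep)
  finally show ?thesis using e1 lin by simp
qed


lemma ex01:
  assumes d2: "2 \<le> d"
  shows "(ev d 0, replicate r 0) \<in> MM d r" "((replicate d (1::int))[0 := 0], replicate r 0) \<in> MM d r"
    "vadd (ev d 0, replicate r 0) ((replicate d (1::int))[0 := 0], replicate r 0) = (replicate d 1, replicate r 0)"
proof -
  have d0: "0 < d" using d2 by simp
  show "(ev d 0, replicate r 0) \<in> MM d r" using ev_MM[OF d0 d2, of "replicate r 0" r] by simp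
  have "\<forall>t\<in>set ((replicate d (1::int))[0 := 0]). 0 \<le> t" by (auto simp: in_set_conv_nth nth_list_update)
  moreover have "(0::int) \<in> set ((replicate d (1::int))[0 := 0])" using d0 unfolding in_set_conv_nth
    by (intro exI[of _ 0]) simp
  ultimately show "((replicate d (1::int))[0 := 0], replicate r 0) \<in> MM d r" by (simp add: MM_iff Min0I)
  show "vadd (ev d 0, replicate r 0) ((replicate d (1::int))[0 := 0], replicate r 0) = (replicate d 1, replicate r 0)"
    using d0 by (auto simp: ev_def vadd_def zip_replicate intro!: nth_equalityI simp: nth_list_update)
qed

lemma Min_b: "length b = r \<Longrightarrow> 0 < r \<Longrightarrow> \<exists>i<r. b ! i = Min (set (b::int list))"
  by (metis List.finite_set Min_in in_set_conv_nth length_0_conv not_less0 set_empty)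

lemma fab_shift2: assumes "x \<in> MM d r" "y \<in> MM d r" "length a = d" "length b = r" "i < r"
  shows "fab a b (shift i (vadd x y)) = fab a b x + fab a b y + Min (set (fst (vadd x y))) * (b!i - sum_list a)"
  using fab_shift[OF _ _ assms(3,4,5)] vadd_len[OF assms(1,2)] fab_add[OF assms(1-4)] by simp

lemma min_fab: assumes "(a, b) \<in> T d r" "x \<in> MM d r" "y \<in> MM d r" "0 < r" "0 < d"
  shows "Min {fab a b (shift i (vadd x y)) | i. i < r} = fab a b x + fab a b y"
proof (rule Min_eqI)
  have la: "length a = d" "length b = r" "sum_list a = Min (set b)" using assms(1) by (auto simp: T_def)
  have c: "0 \<le> Min (set (fst (vadd x y)))" using vadd_min_ge[OF assms(2,3,5)] .
  have "{fab a b (shift i (vadd x y)) | i. i < r} = (\<lambda>i. fab a b (shift i (vadd x y))) ` {..<r}" by auto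
  then show "finite {fab a b (shift i (vadd x y)) | i. i < r}" by simp
  show "fab a b x + fab a b y \<le> z" if zin: "z \<in> {fab a b (shift i (vadd x y)) | i. i < r}" for z
  proof -
    obtain i where i: "i < r" "z = fab a b (shift i (vadd x y))" using zin by blast
    have "b ! i \<in> set b" using i la by simp
    then have "sum_list a \<le> b ! i" using la by simp
    then show ?thesis using i fab_shift2[OF assms(2,3) la(1,2) i(1)] c by simp
  qed
  obtain i where i: "i < r" "b ! i = Min (set b)" using Min_b[OF la(2) assms(4)] by blast
  then have "fab a b (shift i (vadd x y)) = fab a b x + fab a b y" using fab_shift2[OF assms(2,3) la(1,2) i(1)] la by simp
  then show "fab a b x + fab a b y \<in> {fab a b (shift i (vadd x y)) | i. i < r}" using i by force
qed

lemma T_chart: assumes "(a, b) \<in> T d r" "i < r" "2 \<le> d"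
  shows "(\<forall>x\<in>MM d r. \<forall>y\<in>MM d r. fab a b (shift i (vadd x y)) = fab a b x + fab a b y) \<longleftrightarrow> b ! i = sum_list a"
proof -
  have la: "length a = d" "length b = r" using assms(1) by (auto simp: T_def)
  show ?thesis
  proof
    assume h: "\<forall>x\<in>MM d r. \<forall>y\<in>MM d r. fab a b (shift i (vadd x y)) = fab a b x + fab a b y"
    note e = ex01[OF assms(3), of r]
    have "Min (set (replicate d (1::int))) = 1" using assms(3) by simp
    then show "b ! i = sum_list a" using h[rule_format, OF e(1) e(2)] e(3) fab_shift2[OF e(1) e(2) la assms(2)] by simp
  qed (use fab_shift2[OF _ _ la assms(2)] in simp)
qed

lemma fab_inj: assumes "(a, b) \<in> T d r" "(a', b') \<in> T d r" "2 \<le> d"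
  "restrict (fab a b) (MM d r) = restrict (fab a' b') (MM d r)"
  shows "(a, b) = (a', b')"
proof -
  have la: "length a = d" "length b = r" "length a' = d" "length b' = r" using assms by (auto simp: T_def)
  have e: "fab a b x = fab a' b' x" if "x \<in> MM d r" for x using assms(4) that by (metis restrict_apply')
  have "a ! k = a' ! k" if "k < d" for k
    using e[OF ev_MM[OF that assms(3), of "replicate r 0" r]] fab_ev1[OF la(1,2) that] fab_ev1[OF la(3,4) that] by simp
  moreover have "b ! k = b' ! k" if "k < r" for k
    using e[of "(replicate d 0, (replicate r 0)[k := 1])"] fab_ev2[OF la(1,2) that] fab_ev2[OF la(3,4) that] assms(3)
    by (simp add: MM_iff)
  ultimately show ?thesis using la by (simp add: nth_equalityI)
qed

lemma setcong: "(\<And>i. i < r \<Longrightarrow> f i = g i) \<Longrightarrow> {f i | i. i < (r::nat)} = {g i | i. i < r}"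
  by (auto; metis)

context PLs begin

definition pt_of :: "int list \<Rightarrow> int list \<Rightarrow> (nat \<times> pt) set \<Rightarrow> int" where
  "pt_of a b = restrict (\<lambda>X. fab a b (inv_into (MM d r) cls X)) (PL d r)"

lemma inj_cls: "inj_on cls (MM d r)" using cls_inj by (meson inj_onI)

lemma cls_PL: "x \<in> MM d r \<Longrightarrow> cls x \<in> PL d r" using PL_eq by simp

lemma pt_of_cls: "x \<in> MM d r \<Longrightarrow> pt_of a b (cls x) = fab a b x"
  using cls_PL inj_cls by (simp add: pt_of_def)

lemma shiftM: "x \<in> MM d r \<Longrightarrow> y \<in> MM d r \<Longrightarrow> i < r \<Longrightarrow> shift i (vadd x y) \<in> MM d r"
  using shift_MM2 vadd_len d0 by blast

lemma pt_of_Sp: assumes "(a, b) \<in> T d r" shows "pt_of a b \<in> Sp d r"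
proof -
  have la: "length a = d" "length b = r" using assms by (auto simp: T_def)
  have "pt_of a b X + pt_of a b Y = Min {pt_of a b (padd d r i X Y) | i. i < r}"
    if "X \<in> PL d r" "Y \<in> PL d r" for X Y
  proof -
    have "X \<in> cls ` MM d r" "Y \<in> cls ` MM d r" using that PL_eq by simp_all
    then obtain x y where xy: "x \<in> MM d r" "y \<in> MM d r" "X = cls x" "Y = cls y" by blast
    have "{pt_of a b (padd d r i X Y) | i. i < r} = {fab a b (shift i (vadd x y)) | i. i < r}"
      by (rule setcong) (use xy padd_cls pt_of_cls shiftM in simp)
    then show ?thesis using min_fab[OF assms xy(1,2) r0 d0] xy pt_of_cls by simp
  qed
  moreover have "pt_of a b (psmul d r i l X) = l * pt_of a b X"
    if "X \<in> PL d r" "0 \<le> l" "i < r" for X l i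
  proof -
    have "X \<in> cls ` MM d r" using that PL_eq by simp
    then obtain x where x: "x \<in> MM d r" "X = cls x" by blast
    show ?thesis using psmul_cls[OF x(1) that(3,2)] pt_of_cls x vscale_MM[OF x(1) that(2) d0] fab_scale[OF x(1) la] by simp
  qed
  ultimately show ?thesis by (auto simp: Sp_def pt_of_def)
qed

lemma pull_pt_of: "pull d r (pt_of a b) = restrict (fab a b) (MM d r)"
  by (rule ext) (simp add: pull_def Phi_eq pt_of_cls)

lemma Sp_class: assumes "p \<in> Sp d r"
  shows "\<exists>a b. (a, b) \<in> T d r \<and> (\<forall>x\<in>MM d r. p (cls x) = fab a b x)"
proof -
  have "\<forall>x\<in>MM d r. \<forall>y\<in>MM d r. p (cls x) + p (cls y) = Min {p (cls (shift i (vadd x y))) | i. i < r}"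
  proof (intro ballI)
    fix x y assume xy: "x \<in> MM d r" "y \<in> MM d r"
    have "{p (padd d r i (cls x) (cls y)) | i. i < r} = {p (cls (shift i (vadd x y))) | i. i < r}"
      by (rule setcong) (use xy padd_cls in simp)
    then show "p (cls x) + p (cls y) = Min {p (cls (shift i (vadd x y))) | i. i < r}"
      using assms cls_PL xy by (simp add: Sp_def)
  qed
  from classify[of d r "\<lambda>x. p (cls x)", OF d2 r0 this] show ?thesis
    by (intro exI conjI) (auto simp: T_def)
qed

lemma Sp_chart_iff: assumes "i < r"
  shows "p \<in> Sp_chart d r i \<longleftrightarrow> p \<in> Sp d r \<and>
     (\<forall>x\<in>MM d r. \<forall>y\<in>MM d r. p (cls (shift i (vadd x y))) = p (cls x) + p (cls y))"
proof -
  have "(\<forall>m\<in>chart d r i. \<forall>m'\<in>chart d r i.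
      p (chartinv d r i (vadd m m')) = p (chartinv d r i m) + p (chartinv d r i m')) \<longleftrightarrow>
     (\<forall>x\<in>MM d r. \<forall>y\<in>MM d r. p (cls (shift i (vadd x y))) = p (cls x) + p (cls y))"
  proof
    assume h: "\<forall>m\<in>chart d r i. \<forall>m'\<in>chart d r i.
      p (chartinv d r i (vadd m m')) = p (chartinv d r i m) + p (chartinv d r i m')"
    show "\<forall>x\<in>MM d r. \<forall>y\<in>MM d r. p (cls (shift i (vadd x y))) = p (cls x) + p (cls y)"
    proof (intro ballI)
      fix x y assume xy: "x \<in> MM d r" "y \<in> MM d r"
      show "p (cls (shift i (vadd x y))) = p (cls x) + p (cls y)"
        using h[rule_format, OF phi_chart[OF xy(1) assms] phi_chart[OF xy(2) assms]]
          padd_cls(2)[OF xy assms] chartinv_phi[OF xy(1) assms] chartinv_phi[OF xy(2) assms] by simp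
    qed
  next
    assume h: "\<forall>x\<in>MM d r. \<forall>y\<in>MM d r. p (cls (shift i (vadd x y))) = p (cls x) + p (cls y)"
    show "\<forall>m\<in>chart d r i. \<forall>m'\<in>chart d r i.
      p (chartinv d r i (vadd m m')) = p (chartinv d r i m) + p (chartinv d r i m')"
    proof (intro ballI)
      fix m m' assume mm: "m \<in> chart d r i" "m' \<in> chart d r i"
      define x where "x = psi i m"
      define y where "y = psi i m'"
      have xy: "x \<in> MM d r" "y \<in> MM d r" using psi_MM mm assms d0 by (auto simp: x_def y_def)
      have "m = phi i x" "m' = phi i y" using phi_psi' mm assms d0 by (auto simp: x_def y_def)
      then show "p (chartinv d r i (vadd m m')) = p (chartinv d r i m) + p (chartinv d r i m')"
        using h xy padd_cls(2)[OF xy assms] chartinv_phi[OF xy(1) assms] chartinv_phi[OF xy(2) assms] by simp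
    qed
  qed
  then show ?thesis by (simp add: Sp_chart_def)
qed

end
theorem mainTheorem16:
  fixes d r :: nat
  assumes "2 \<le> d" and "2 \<le> r"
  shows "(\<forall>i<r. bij_betw (phi i) (MM d r) (chart d r i))
    \<and> (\<forall>i. Suc i < r \<longrightarrow> (\<forall>x\<in>MM d r. mu i (phi i x) = phi (Suc i) x))
    \<and> (\<forall>x\<in>MM d r. \<forall>i<r. (i, phi i x) \<in> Phi d r x \<and> chartmap i (Phi d r x) = phi i x)
    \<and> bij_betw (Phi d r) (MM d r) (PL d r)
    \<and> bij_betw (\<lambda>(a, b). restrict (fab a b) (MM d r)) (T d r) (pull d r ` Sp d r)
    \<and> (\<forall>i<r. bij_betw (\<lambda>(a, b). restrict (fab a b) (MM d r)) (T_i d r i) (pull d r ` Sp_chart d r i))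
    \<and> full d r"
proof -
  interpret PLs d r using assms by unfold_locales
  have c1: "\<forall>i<r. bij_betw (phi i) (MM d r) (chart d r i)"
  proof (intro allI impI)
    fix i assume i: "i < r"
    show "bij_betw (phi i) (MM d r) (chart d r i)"
      by (rule bij_betw_byWitness[where f'="psi i"])
        (use i psi_phi_MM phi_psi' phi_chart psi_MM d0 in auto)
  qed
  have c2: "\<forall>i. Suc i < r \<longrightarrow> (\<forall>x\<in>MM d r. mu i (phi i x) = phi (Suc i) x)"
    using mu_phi d0 by blast
  have c3: "\<forall>x\<in>MM d r. \<forall>i<r. (i, phi i x) \<in> Phi d r x \<and> chartmap i (Phi d r x) = phi i x"
    using Phi_eq chartmap_cls by (auto simp: cls_def)
  have c4: "bij_betw (Phi d r) (MM d r) (PL d r)"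
  proof -
    have "inj_on (Phi d r) (MM d r)" using inj_cls Phi_eq inj_on_cong by metis
    moreover have "Phi d r ` MM d r = PL d r" using PL_eq Phi_eq by simp
    ultimately show ?thesis by (simp add: bij_betw_def)
  qed
  define F where "F = (\<lambda>(a, b). restrict (fab a b) (MM d r))"
  have pull_eq: "pull d r p = restrict (fab a b) (MM d r)" if "\<forall>x\<in>MM d r. p (cls x) = fab a b x" for p a b
    using that by (intro ext) (simp add: pull_def Phi_eq)
  have injF: "inj_on F A" if "A \<subseteq> T d r" for A
  proof (rule inj_onI)
    fix x y assume xy: "x \<in> A" "y \<in> A" "F x = F y"
    obtain a b a' b' where e: "x = (a, b)" "y = (a', b')" by fastforce
    show "x = y" using fab_inj[of a b d r a' b', OF _ _ d2] xy e that by (auto simp: F_def)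
  qed
  have c5: "bij_betw F (T d r) (pull d r ` Sp d r)"
  proof -
    have "F ` T d r \<subseteq> pull d r ` Sp d r"
    proof clarify
      fix a b assume ab: "(a, b) \<in> T d r"
      show "F (a, b) \<in> pull d r ` Sp d r" 
      proof -
        have "F (a, b) = pull d r (pt_of a b)" by (simp add: F_def pull_pt_of)
        then show ?thesis using pt_of_Sp[OF ab] by blast
      qed
    qed
    moreover have "pull d r ` Sp d r \<subseteq> F ` T d r"
    proof clarify
      fix p assume p: "p \<in> Sp d r"
      obtain a b where ab: "(a, b) \<in> T d r" "\<forall>x\<in>MM d r. p (cls x) = fab a b x" using Sp_class[OF p] by blast
      show "pull d r p \<in> F ` T d r" 
      proof -
        have "pull d r p = F (a, b)" by (simp add: F_def pull_eq[OF ab(2)])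
        then show ?thesis using ab(1) by blast
      qed
    qed
    ultimately show ?thesis using injF by (simp add: bij_betw_def)
  qed
  have Ti: "(a, b) \<in> T_i d r i \<longleftrightarrow> (a, b) \<in> T d r \<and> b ! i = sum_list a" for a b i
    by (auto simp: T_i_def)
  have c6: "\<forall>i<r. bij_betw F (T_i d r i) (pull d r ` Sp_chart d r i)"
  proof (intro allI impI)
    fix i assume i: "i < r"
    have "F ` T_i d r i \<subseteq> pull d r ` Sp_chart d r i"
    proof clarify
      fix a b assume ab: "(a, b) \<in> T_i d r i"
      have abT: "(a, b) \<in> T d r" "b ! i = sum_list a" using ab Ti by auto
      have "pt_of a b \<in> Sp_chart d r i"
        unfolding Sp_chart_iff[OF i]
        using pt_of_Sp[OF abT(1)] T_chart[OF abT(1) i d2] abT(2) pt_of_cls shiftM i by simp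
      then show "F (a, b) \<in> pull d r ` Sp_chart d r i" 
      proof -
        have "F (a, b) = pull d r (pt_of a b)" by (simp add: F_def pull_pt_of)
        then show ?thesis using \<open>pt_of a b \<in> Sp_chart d r i\<close> by blast
      qed
    qed
    moreover have "pull d r ` Sp_chart d r i \<subseteq> F ` T_i d r i"
    proof clarify
      fix p assume p: "p \<in> Sp_chart d r i"
      then have pS: "p \<in> Sp d r" and h: "\<forall>x\<in>MM d r. \<forall>y\<in>MM d r. p (cls (shift i (vadd x y))) = p (cls x) + p (cls y)"
        using Sp_chart_iff[OF i] by auto
      obtain a b where ab: "(a, b) \<in> T d r" "\<forall>x\<in>MM d r. p (cls x) = fab a b x" using Sp_class[OF pS] by blast
      have "b ! i = sum_list a" using T_chart[OF ab(1) i d2] h ab(2) shiftM i by simp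
      then have "(a, b) \<in> T_i d r i" using ab Ti by simp
      then show "pull d r p \<in> F ` T_i d r i" 
      proof -
        have "pull d r p = F (a, b)" by (simp add: F_def pull_eq[OF ab(2)])
        then show ?thesis using \<open>(a, b) \<in> T_i d r i\<close> by blast
      qed
    qed
    moreover have "T_i d r i \<subseteq> T d r" by (auto simp: T_i_def)
    ultimately show "bij_betw F (T_i d r i) (pull d r ` Sp_chart d r i)" using injF by (simp add: bij_betw_def)
  qed
  have c7: "full d r"
  proof -
    have "Sp d r \<subseteq> (\<Union>i<r. Sp_chart d r i)"
    proof
      fix p assume pS: "p \<in> Sp d r"
      obtain a b where ab: "(a, b) \<in> T d r" "\<forall>x\<in>MM d r. p (cls x) = fab a b x" using Sp_class[OF pS] by blast
      have lb: "length b = r" "sum_list a = Min (set b)" using ab by (auto simp: T_def)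
      obtain i where i: "i < r" "b ! i = Min (set b)" using Min_b[OF lb(1) r0] by blast
      have "p \<in> Sp_chart d r i"
        unfolding Sp_chart_iff[OF i(1)]
        using pS T_chart[OF ab(1) i(1) d2] i lb ab(2) shiftM by simp
      then show "p \<in> (\<Union>i<r. Sp_chart d r i)" using i by blast
    qed
    moreover have "(\<Union>i<r. Sp_chart d r i) \<subseteq> Sp d r" by (auto simp: Sp_chart_def)
    ultimately show ?thesis by (simp add: full_def)
  qed
  show ?thesis using c1 c2 c3 c4 c5 c6 c7 unfolding F_def by blast
qed

end
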